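(* For $\alpha\in(0,\pi)$ let $\mathfrak{K}_\alpha(\tau):=\big(4\sin^2(\alpha)+(\sqrt\tau-1/\sqrt\tau)^2\big)^{-1/4}$, $\tau>0$, and let $\widehat{\mathfrak{K}}_\alpha$ denote the analytic extension to $\mathbb{C}\setminus\big((1/4+\mathbb{N})\cup(-1/4-\mathbb{N})\big)$ of its Mellin transform $\lambda\mapsto\int_0^\infty\mathfrak{K}_\alpha(r)r^{-\lambda}\,dr/r$, with $\widehat{\mathfrak{K}}_{\pi/2}-\widehat{\mathfrak{K}}_\alpha$ understood as the Mellin transform of $\mathfrak{K}_{\pi/2}-\mathfrak{K}_\alpha$, analytic in $|\mathrm{Re}\,\lambda|<5/4$. Then for all $\alpha\in(0,\pi)$, $$\sup_{\lambda\in\pm1/4+\imath\mathbb{R}}|\widehat{\mathfrak{K}}_\alpha(\lambda)-\widehat{\mathfrak{K}}_{\pi/2}(\lambda)|<+\infty\qquad\text{and}\qquad\sup_{\lambda\in\imath\mathbb{R}}|\widehat{\mathfrak{K}}_\alpha(\lambda)|<+\infty.$$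
   Context: $\mathbb{N}=\{0,1,2,\dots\}$. *)

theory Defs
  imports "HOL-Analysis.Analysis"
begin

definition Kfrak :: "real \<Rightarrow> real \<Rightarrow> real" where
  "Kfrak \<alpha> \<tau> = (4 * (sin \<alpha>)\<^sup>2 + (sqrt \<tau> - 1 / sqrt \<tau>)\<^sup>2) powr (-1/4)"

definition mellin_integrand :: "(real \<Rightarrow> real) \<Rightarrow> complex \<Rightarrow> real \<Rightarrow> complex" where
  "mellin_integrand f z r = complex_of_real (f r) * (complex_of_real r) powr (- z) / complex_of_real r"

definition mellin_integrable :: "(real \<Rightarrow> real) \<Rightarrow> complex \<Rightarrow> bool" where
  "mellin_integrable f z \<longleftrightarrow> set_integrable lborel {0<..} (mellin_integrand f z)"

definition mellin :: "(real \<Rightarrow> real) \<Rightarrow> complex \<Rightarrow> complex" where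
  "mellin f z = (LINT r:{0<..}|lborel. mellin_integrand f z r)"

end

theory Submission
  imports Defs
begin

lemma int_powr_01:
  assumes "a > (-1::real)"
  shows "set_integrable lborel {0<..1} (\<lambda>x::real. x powr a)"
proof -
  have "(\<lambda>t. t powr a) integrable_on {0<..1}"
    by (rule integrable_on_powr_from_0') (use assms in auto)
  hence "(\<lambda>t. t powr a) absolutely_integrable_on {0<..1}"
    by (subst absolutely_integrable_on_iff_nonneg) auto
  thus ?thesis unfolding set_integrable_def
    by (subst (asm) integrable_completion) auto
qed

lemma int_powr_inf:
  assumes "e < (-1::real)"
  shows "set_integrable lborel {1<..} (\<lambda>x::real. x powr e)"
proof -
  have "(\<lambda>t. t powr e) integrable_on {1..}"
    using has_integral_powr_to_inf[OF assms, of 1] by (auto simp: integrable_on_def)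
  hence "(\<lambda>t. t powr e) absolutely_integrable_on {1..}"
    by (subst absolutely_integrable_on_iff_nonneg) auto
  hence "set_integrable lborel {1..} (\<lambda>x::real. x powr e)" unfolding set_integrable_def
    by (subst (asm) integrable_completion) auto
  thus ?thesis by (rule set_integrable_subset) auto
qed

lemma dominate:
  fixes g :: "real \<Rightarrow> real"
  assumes meas[measurable]: "g \<in> borel_measurable lborel" and a: "a > -1" and e: "e < -1"
    and b1: "\<And>r. 0 < r \<Longrightarrow> r \<le> 1 \<Longrightarrow> \<bar>g r\<bar> \<le> C * r powr a"
    and b2: "\<And>r. 1 < r \<Longrightarrow> \<bar>g r\<bar> \<le> C * r powr e"
  shows "set_integrable lborel {0<..} g"
proof -
  have m: "set_borel_measurable lborel {0<..1} g" "set_borel_measurable lborel {1<..} g"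
    unfolding set_borel_measurable_def
    by (rule borel_measurable_scaleR[OF borel_measurable_indicator meas], simp)+
  have i1: "set_integrable lborel {0<..1} g"
  proof (rule set_integrable_bound[OF _ m(1)])
    show "set_integrable lborel {0<..1} (\<lambda>x. C * x powr a)"
      using int_powr_01[OF a] by (rule set_integrable_mult_right)
    show "AE x in lborel. x \<in> {0<..1} \<longrightarrow> norm (g x) \<le> norm (C * x powr a)"
    proof (intro AE_I2 impI)
      fix x :: real assume "x \<in> {0<..1}"
      then have "\<bar>g x\<bar> \<le> C * x powr a" using b1 by auto
      then show "norm (g x) \<le> norm (C * x powr a)" by (metis real_norm_def abs_ge_self order_trans)
    qed
  qed
  have i2: "set_integrable lborel {1<..} g"
  proof (rule set_integrable_bound[OF _ m(2)])
    show "set_integrable lborel {1<..} (\<lambda>x. C * x powr e)"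
      using int_powr_inf[OF e] by (rule set_integrable_mult_right)
    show "AE x in lborel. x \<in> {1<..} \<longrightarrow> norm (g x) \<le> norm (C * x powr e)"
    proof (intro AE_I2 impI)
      fix x :: real assume "x \<in> {1<..}"
      then have "\<bar>g x\<bar> \<le> C * x powr e" using b2 by auto
      then show "norm (g x) \<le> norm (C * x powr e)" by (metis real_norm_def abs_ge_self order_trans)
    qed
  qed
  have "({0<..} :: real set) = {0<..1} \<union> {1<..}" by auto
  thus ?thesis using set_integrable_Un[OF i1 i2] by simp
qed

lemma meas_test: "(\<lambda>r. Kfrak a r - Kfrak b r) \<in> borel_measurable lborel"
  unfolding Kfrak_def by measurable

lemma meas_int:
  assumes [measurable]: "f \<in> borel_measurable lborel"
  shows "set_borel_measurable lborel {0<..} (mellin_integrand f z)"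
proof -
  have "(\<lambda>x. indicator {0<..} x *\<^sub>R mellin_integrand f z x) =
        (\<lambda>x. indicator {0<..} x *\<^sub>R (complex_of_real (f x) * exp (- z * complex_of_real (ln x)) / complex_of_real x))"
    by (rule ext) (auto simp: indicator_def mellin_integrand_def powr_def Ln_of_real)
  moreover have "(\<lambda>x. indicator {0<..} x *\<^sub>R (complex_of_real (f x) * exp (- z * complex_of_real (ln x)) / complex_of_real x)) \<in> borel_measurable lborel"
    by measurable
  ultimately show ?thesis unfolding set_borel_measurable_def by simp
qed

lemma mvt_bound:
  fixes u v :: real
  assumes "0 < v" "v \<le> u"
  shows "v powr (-1/4) - u powr (-1/4) \<le> (u - v) / 4 * v powr (-5/4)"
proof (cases "v = u")
  case True thus ?thesis by simp
next
  case False
  hence vu: "v < u" using assms by simp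
  have "\<exists>z. v < z \<and> z < u \<and> (u powr (-1/4) - v powr (-1/4) = (u - v) * ((-1/4) * z powr (-1/4 - 1)))"
  proof (rule MVT2[OF vu])
    fix x assume "v \<le> x" "x \<le> u"
    hence "x > 0" using assms by simp
    thus "DERIV (\<lambda>x. x powr (-1/4)) x :> (-1/4) * x powr (-1/4 - 1)"
      by (auto intro!: derivative_eq_intros)
  qed
  then obtain z where z: "v < z" "z < u" "u powr (-1/4) - v powr (-1/4) = (u - v) * ((-1/4) * z powr (-5/4))"
    by auto
  have "z powr (-5/4) \<le> v powr (-5/4)"
    using z assms by (intro powr_mono2') auto
  hence "(u - v) * z powr (-5/4) \<le> (u - v) * v powr (-5/4)"
    using vu by (intro mult_left_mono) auto
  hence "(u - v) / 4 * z powr (-5/4) \<le> (u - v) / 4 * v powr (-5/4)" by simp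
  moreover have "v powr (-1/4) - u powr (-1/4) = (u - v) / 4 * z powr (-5/4)"
    using z(3) by (simp add: field_simps)
  ultimately show ?thesis by linarith
qed

lemma w_eq: "0 < r \<Longrightarrow> (sqrt r - 1 / sqrt r)\<^sup>2 = r + 1/r - 2"
  by (simp add: power2_eq_square field_simps real_sqrt_mult[symmetric])

lemma low_bound:
  fixes s w x :: real
  assumes "0 < s" "s \<le> 1" "0 \<le> w" "x \<le> w + 4"
  shows "s * x \<le> 4 * s + w"
proof -
  have "s * x \<le> s * (w + 4)" using assms by (intro mult_left_mono) auto
  also have "\<dots> \<le> 4 * s + w" using assms by (simp add: algebra_simps mult_left_le_one_le)
  finally show ?thesis .
qed

lemma x_le: "0 < r \<Longrightarrow> r \<le> (sqrt r - 1 / sqrt r)\<^sup>2 + 4 \<and> 1 / r \<le> (sqrt r - 1 / sqrt r)\<^sup>2 + 4"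
  by (simp add: w_eq)

lemma K_le:
  assumes s: "0 < s" "s \<le> 1" and r: "0 < r" and x: "x = r \<or> x = 1 / r"
  shows "(4 * s + (sqrt r - 1 / sqrt r)\<^sup>2) powr (-1/4) \<le> s powr (-1/4) * x powr (-1/4)"
proof -
  have x0: "0 < x" using x r by auto
  have "s * x \<le> 4 * s + (sqrt r - 1 / sqrt r)\<^sup>2"
    using x_le[OF r] x s by (intro low_bound) auto
  hence "(4 * s + (sqrt r - 1 / sqrt r)\<^sup>2) powr (-1/4) \<le> (s * x) powr (-1/4)"
    using s x0 by (intro powr_mono2') auto
  thus ?thesis by (simp add: powr_mult)
qed

lemma D_le:
  assumes s: "0 < s" "s \<le> 1" and r: "0 < r" and x: "x = r \<or> x = 1 / r"
  shows "\<bar>(4 + (sqrt r - 1 / sqrt r)\<^sup>2) powr (-1/4) - (4 * s + (sqrt r - 1 / sqrt r)\<^sup>2) powr (-1/4)\<bar>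
          \<le> s powr (-5/4) * x powr (-5/4)"
proof -
  define w where "w = (sqrt r - 1 / sqrt r)\<^sup>2"
  have w0: "0 \<le> w" by (simp add: w_def)
  have x0: "0 < x" using x r by auto
  have v0: "0 < 4 * s + w" using s w0 by simp
  have vu: "4 * s + w \<le> 4 + w" using s by simp
  have "(4 + w) powr (-1/4) \<le> (4 * s + w) powr (-1/4)"
    using v0 vu by (intro powr_mono2') auto
  hence "\<bar>(4 + w) powr (-1/4) - (4 * s + w) powr (-1/4)\<bar> = (4 * s + w) powr (-1/4) - (4 + w) powr (-1/4)"
    by simp
  also have "\<dots> \<le> ((4 + w) - (4 * s + w)) / 4 * (4 * s + w) powr (-5/4)"
    by (rule mvt_bound[OF v0 vu])
  also have "\<dots> \<le> 1 * (4 * s + w) powr (-5/4)"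
    using s by (intro mult_right_mono) auto
  also have "\<dots> \<le> (s * x) powr (-5/4)"
  proof -
    have "s * x \<le> 4 * s + w"
      using x_le[OF r] x s w0 unfolding w_def by (intro low_bound) auto
    thus ?thesis using s x0 by (simp, intro powr_mono2') auto
  qed
  finally show ?thesis by (simp add: powr_mult w_def)
qed


definition nf :: "(real \<Rightarrow> real) \<Rightarrow> real \<Rightarrow> real \<Rightarrow> real" where
  "nf f \<sigma> r = \<bar>f r\<bar> * r powr (- \<sigma> - 1)"

lemma norm_integrand:
  assumes "0 < r"
  shows "norm (mellin_integrand f z r) = nf f (Re z) r"
proof -
  have "cmod (complex_of_real r powr (- z)) = r powr (- Re z)"
    using assms by (subst norm_powr_real_powr) auto
  moreover have "r powr (- Re z - 1) = r powr (- Re z) / r"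
    using assms by (simp add: powr_diff)
  ultimately show ?thesis using assms
    by (simp add: mellin_integrand_def nf_def norm_mult norm_divide)
qed

lemma mellin_int_from:
  assumes [measurable]: "f \<in> borel_measurable lborel"
    and i: "set_integrable lborel {0<..} (nf f (Re z))"
  shows "mellin_integrable f z"
  unfolding mellin_integrable_def
proof (rule set_integrable_bound[OF i meas_int[OF assms(1)]])
  show "AE x in lborel. x \<in> {0<..} \<longrightarrow> norm (mellin_integrand f z x) \<le> norm (nf f (Re z) x)"
    by (intro AE_I2 impI) (simp add: norm_integrand nf_def)
qed

lemma mellin_le:
  assumes [measurable]: "f \<in> borel_measurable lborel"
    and i: "set_integrable lborel {0<..} (nf f (Re z))"
  shows "cmod (mellin f z) \<le> (LINT r:{0<..}|lborel. nf f (Re z) r)"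
proof -
  have mi: "set_integrable lborel {0<..} (mellin_integrand f z)"
    using mellin_int_from[OF assms] unfolding mellin_integrable_def .
  have "cmod (mellin f z) \<le> (LINT r:{0<..}|lborel. norm (mellin_integrand f z r))"
    unfolding mellin_def by (rule set_integral_norm_bound[OF mi])
  also have "\<dots> = (LINT r:{0<..}|lborel. nf f (Re z) r)"
    by (rule set_lebesgue_integral_cong) (auto simp: norm_integrand)
  finally show ?thesis .
qed

theorem corollary4:
  fixes \<alpha> :: real
  assumes "0 < \<alpha>" and "\<alpha> < pi"
  shows "(\<forall>z. (Re z = 1/4 \<or> Re z = -1/4) \<longrightarrow>
            mellin_integrable (\<lambda>r. Kfrak (pi/2) r - Kfrak \<alpha> r) z)
       \<and> bdd_above ((\<lambda>z. cmod (mellin (\<lambda>r. Kfrak (pi/2) r - Kfrak \<alpha> r) z))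
                     ` {z. Re z = 1/4 \<or> Re z = -1/4})
       \<and> (\<forall>z. Re z = 0 \<longrightarrow> mellin_integrable (Kfrak \<alpha>) z)
       \<and> bdd_above ((\<lambda>z. cmod (mellin (Kfrak \<alpha>) z)) ` {z. Re z = 0})"
proof -
  define s where "s = (sin \<alpha>)\<^sup>2"
  have "sin \<alpha> > 0" using assms by (intro sin_gt_zero)
  hence s: "0 < s" "s \<le> 1" unfolding s_def by (auto simp: abs_square_le_1)
  define D where "D = (\<lambda>r. Kfrak (pi/2) r - Kfrak \<alpha> r)"
  have mD[measurable]: "D \<in> borel_measurable lborel" unfolding D_def by (rule meas_test)
  have mK[measurable]: "Kfrak \<alpha> \<in> borel_measurable lborel" unfolding Kfrak_def by measurable
  have Deq: "D r = (4 + (sqrt r - 1 / sqrt r)\<^sup>2) powr (-1/4) - (4 * s + (sqrt r - 1 / sqrt r)\<^sup>2) powr (-1/4)" for r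
    by (simp add: D_def Kfrak_def s_def)
  have Keq: "Kfrak \<alpha> r = (4 * s + (sqrt r - 1 / sqrt r)\<^sup>2) powr (-1/4)" for r
    by (simp add: Kfrak_def s_def)
  have intD: "set_integrable lborel {0<..} (nf D \<sigma>)" if \<sigma>: "\<sigma> = 1/4 \<or> \<sigma> = -1/4" for \<sigma>
  proof (rule dominate[where a = 0 and e = "-2" and C = "s powr (-5/4)"])
    show "nf D \<sigma> \<in> borel_measurable lborel" unfolding nf_def by measurable
  next
    fix r :: real assume r: "0 < r" "r \<le> 1"
    have "\<bar>D r\<bar> \<le> s powr (-5/4) * (1/r) powr (-5/4)"
      unfolding Deq using D_le[OF s r(1)] by auto
    also have "(1/r) powr (-5/4) = r powr (5/4)" using r by (simp add: powr_divide powr_minus_divide)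
    finally have d: "\<bar>D r\<bar> \<le> s powr (-5/4) * r powr (5/4)" .
    have p: "r powr (- \<sigma> - 1) \<le> r powr (-5/4)"
      using r \<sigma> by (intro powr_mono') auto
    have "nf D \<sigma> r \<le> (s powr (-5/4) * r powr (5/4)) * r powr (-5/4)"
      unfolding nf_def using d p by (intro mult_mono) auto
    also have "\<dots> = s powr (-5/4) * r powr 0"
      using r by (simp add: powr_add[symmetric])
    finally show "\<bar>nf D \<sigma> r\<bar> \<le> s powr (-5/4) * r powr 0" by (simp add: nf_def)
  next
    fix r :: real assume r: "1 < r"
    have d: "\<bar>D r\<bar> \<le> s powr (-5/4) * r powr (-5/4)"
      unfolding Deq using D_le[OF s, of r r] r by auto
    have p: "r powr (- \<sigma> - 1) \<le> r powr (-3/4)"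
      using r \<sigma> by (intro powr_mono) auto
    have "nf D \<sigma> r \<le> (s powr (-5/4) * r powr (-5/4)) * r powr (-3/4)"
      unfolding nf_def using d p by (intro mult_mono) auto
    also have "\<dots> = s powr (-5/4) * r powr (-2)"
      using r by (simp add: powr_add[symmetric])
    finally show "\<bar>nf D \<sigma> r\<bar> \<le> s powr (-5/4) * r powr (-2)" by (simp add: nf_def)
  qed auto
  have intK: "set_integrable lborel {0<..} (nf (Kfrak \<alpha>) 0)"
  proof (rule dominate[where a = "-3/4" and e = "-5/4" and C = "s powr (-1/4)"])
    show "nf (Kfrak \<alpha>) 0 \<in> borel_measurable lborel" unfolding nf_def by measurable
  next
    fix r :: real assume r: "0 < r" "r \<le> 1"
    have "Kfrak \<alpha> r \<le> s powr (-1/4) * (1/r) powr (-1/4)"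
      unfolding Keq using K_le[OF s r(1)] by auto
    also have "(1/r) powr (-1/4) = r powr (1/4)" using r by (simp add: powr_divide powr_minus_divide)
    finally have d: "Kfrak \<alpha> r \<le> s powr (-1/4) * r powr (1/4)" .
    have k0: "Kfrak \<alpha> r \<ge> 0" by (simp add: Kfrak_def)
    have "nf (Kfrak \<alpha>) 0 r \<le> (s powr (-1/4) * r powr (1/4)) * r powr (-1)"
    proof -
      have "nf (Kfrak \<alpha>) 0 r = Kfrak \<alpha> r * r powr (-1)" using k0 by (simp add: nf_def)
      thus ?thesis using d by (simp only:) (intro mult_right_mono, auto)
    qed
    also have "\<dots> = s powr (-1/4) * r powr (-3/4)"
    proof -
      have "r powr (1/4) * r powr (-1) = r powr (-3/4)" by (subst powr_add[symmetric]) simp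
      thus ?thesis by (simp only: mult.assoc)
    qed
    finally show "\<bar>nf (Kfrak \<alpha>) 0 r\<bar> \<le> s powr (-1/4) * r powr (-3/4)" by (simp add: nf_def)
  next
    fix r :: real assume r: "1 < r"
    have d: "Kfrak \<alpha> r \<le> s powr (-1/4) * r powr (-1/4)"
      unfolding Keq using K_le[OF s, of r r] r by auto
    have k0: "Kfrak \<alpha> r \<ge> 0" by (simp add: Kfrak_def)
    have "nf (Kfrak \<alpha>) 0 r \<le> (s powr (-1/4) * r powr (-1/4)) * r powr (-1)"
    proof -
      have "nf (Kfrak \<alpha>) 0 r = Kfrak \<alpha> r * r powr (-1)" using k0 by (simp add: nf_def)
      thus ?thesis using d by (simp only:) (intro mult_right_mono, auto)
    qed
    also have "\<dots> = s powr (-1/4) * r powr (-5/4)"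
    proof -
      have "r powr (-1/4) * r powr (-1) = r powr (-5/4)" by (subst powr_add[symmetric]) simp
      thus ?thesis by (simp only: mult.assoc)
    qed
    finally show "\<bar>nf (Kfrak \<alpha>) 0 r\<bar> \<le> s powr (-1/4) * r powr (-5/4)" by (simp add: nf_def)
  qed auto
  have c1: "\<forall>z. (Re z = 1/4 \<or> Re z = -1/4) \<longrightarrow> mellin_integrable D z"
    using intD mellin_int_from[OF mD] by auto
  have c2: "bdd_above ((\<lambda>z. cmod (mellin D z)) ` {z. Re z = 1/4 \<or> Re z = -1/4})"
  proof (rule bdd_aboveI)
    fix x assume "x \<in> (\<lambda>z. cmod (mellin D z)) ` {z. Re z = 1/4 \<or> Re z = -1/4}"
    then obtain z where z: "Re z = 1/4 \<or> Re z = -1/4" "x = cmod (mellin D z)" by auto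
    have "x \<le> (LINT r:{0<..}|lborel. nf D (Re z) r)"
      using z mellin_le[OF mD intD[OF z(1)]] by simp
    thus "x \<le> max (LINT r:{0<..}|lborel. nf D (1/4) r) (LINT r:{0<..}|lborel. nf D (-1/4) r)"
    proof (cases "Re z = 1/4")
      case True thus ?thesis using \<open>x \<le> _\<close> by (metis max.cobounded1 order_trans)
    next
      case False hence "Re z = -1/4" using z(1) by simp
      thus ?thesis using \<open>x \<le> _\<close> by (metis max.cobounded2 order_trans)
    qed
  qed
  have c3: "\<forall>z. Re z = 0 \<longrightarrow> mellin_integrable (Kfrak \<alpha>) z"
    using intK mellin_int_from[OF mK] by auto
  have c4: "bdd_above ((\<lambda>z. cmod (mellin (Kfrak \<alpha>) z)) ` {z. Re z = 0})"
  proof (rule bdd_aboveI)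
    fix x assume "x \<in> (\<lambda>z. cmod (mellin (Kfrak \<alpha>) z)) ` {z. Re z = 0}"
    then obtain z where z: "Re z = 0" "x = cmod (mellin (Kfrak \<alpha>) z)" by auto
    show "x \<le> (LINT r:{0<..}|lborel. nf (Kfrak \<alpha>) 0 r)"
      using z mellin_le[OF mK, of z] intK by simp
  qed
  show ?thesis using c1 c2 c3 c4 unfolding D_def by blast
qed

end
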